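(* Let $H=(T_1,\dots,T_n,p_1,\dots,p_n)$ be any strategic game. Then for the operator $\overline{GS}$ on the lattice of restrictions of $H$: (i) the largest fixpoint of $\overline{GS}$ exists and equals its outcome; (ii) $\overline{GS}$ is order independent; (iii) for every relaxation $R$ of $\overline{GS}$ and every ordinal $\alpha$, $\overline{GS}^{\alpha}\subseteq R^{\alpha}$.
   Context: A strategic game $H=(T_1,\dots,T_n,p_1,\dots,p_n)$ has nonempty strategy sets $T_i$ and payoffs $p_i:T_1\times\dots\times T_n\to\mathbb R$. A restriction is $G=(S_1,\dots,S_n)$ with $S_i\subseteq T_i$ (possibly empty), ordered by componentwise inclusion (a complete lattice with top $H$). For $s_i,s_i'\in T_i$, $s_i'\succ_G s_i$ means $p_i(s_i',s_{-i})>p_i(s_i,s_{-i})$ for all $s_{-i}\in S_{-i}:=\prod_{j\ne i}S_j$ (vacuously true if $S_{-i}=\emptyset$). $GS(G):=(S_1',\dots,S_n')$ with $S_i':=\{s_i\in T_i\mid\neg\exists s_i'\in T_i:\ s_i'\succ_G s_i\}$, and $\overline{GS}(G):=GS(G)\cap G$. Operator notions: fixpoint $T(G)=G$; iterations $T^0:=H$, $T^{\alpha+1}:=T(T^\alpha)$, $T^\beta:=\bigcap_{\alpha<\beta}T^\alpha$ for limit $\beta$; outcome $T^{\alpha_T}$ with $\alpha_T$ the least $\alpha$ such that $T^{\alpha+1}=T^\alpha$. $R$ is a relaxation of $T$ if for all ordinals $\alpha$: (1) $T(R^\alpha)\subseteq R(R^\alpha)$; (2) if $T(R^\alpha)\subseteq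 R^\alpha$ then $R(R^\alpha)\subseteq R^\alpha$; (3) if $R(R^\alpha)=R^\alpha$ then $T(R^\alpha)=R^\alpha$. $T$ is order independent if the set of outcomes of relaxations of $T$ has at most one element. *)

theory Defs
  imports Complex_Main
begin

text \<open>A strategic game: players are the elements of a finite type 'i, strategy sets
  T i :: 'a set (nonempty), payoffs p i :: ('i \<Rightarrow> 'a) \<Rightarrow> real on strategy profiles.
  Restrictions G = (S_1,...,S_n) are functions S :: 'i \<Rightarrow> 'a set with S i \<subseteq> T i,
  ordered componentwise by the pointwise order \<le> on functions.\<close>

definition restriction :: "('i \<Rightarrow> 'a set) \<Rightarrow> ('i \<Rightarrow> 'a set) \<Rightarrow> bool" where
  "restriction T S \<longleftrightarrow> (\<forall>i. S i \<subseteq> T i)"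

text \<open>s' strictly dominates s for player i given restriction S (quantifying over all
  s_{-i} in S_{-i}; a full profile t whose i-th entry is overwritten).\<close>
definition sdom :: "('i \<Rightarrow> ('i \<Rightarrow> 'a) \<Rightarrow> real) \<Rightarrow> ('i \<Rightarrow> 'a set) \<Rightarrow> 'i \<Rightarrow> 'a \<Rightarrow> 'a \<Rightarrow> bool" where
  "sdom p S i s' s \<longleftrightarrow> (\<forall>t. (\<forall>j. j \<noteq> i \<longrightarrow> t j \<in> S j) \<longrightarrow> p i (t(i := s')) > p i (t(i := s)))"

definition GS :: "('i \<Rightarrow> 'a set) \<Rightarrow> ('i \<Rightarrow> ('i \<Rightarrow> 'a) \<Rightarrow> real) \<Rightarrow> ('i \<Rightarrow> 'a set) \<Rightarrow> ('i \<Rightarrow> 'a set)" where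
  "GS T p S = (\<lambda>i. {s \<in> T i. \<not> (\<exists>s' \<in> T i. sdom p S i s' s)})"

definition GSbar :: "('i \<Rightarrow> 'a set) \<Rightarrow> ('i \<Rightarrow> ('i \<Rightarrow> 'a) \<Rightarrow> real) \<Rightarrow> ('i \<Rightarrow> 'a set) \<Rightarrow> ('i \<Rightarrow> 'a set)" where
  "GSbar T p S = (\<lambda>i. GS T p S i \<inter> S i)"

definition operator_on :: "('i \<Rightarrow> 'a set) \<Rightarrow> (('i \<Rightarrow> 'a set) \<Rightarrow> ('i \<Rightarrow> 'a set)) \<Rightarrow> bool" where
  "operator_on T F \<longleftrightarrow> (\<forall>S. restriction T S \<longrightarrow> restriction T (F S))"

text \<open>Infimum in the lattice of restrictions of the game with strategy sets T
  (the infimum of the empty family is the top element T).\<close>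
definition rInf :: "('i \<Rightarrow> 'a set) \<Rightarrow> ('i \<Rightarrow> 'a set) set \<Rightarrow> ('i \<Rightarrow> 'a set)" where
  "rInf T A = (\<lambda>i. T i \<inter> (\<Inter>S\<in>A. S i))"

text \<open>Ordinals are modelled by the elements of a well-ordered index type 'o.
  beta is the immediate predecessor of alpha iff alpha = beta + 1.\<close>
definition imm_pred :: "'o::wellorder \<Rightarrow> 'o \<Rightarrow> bool" where
  "imm_pred \<beta> \<alpha> \<longleftrightarrow> \<beta> < \<alpha> \<and> \<not> (\<exists>\<gamma>. \<beta> < \<gamma> \<and> \<gamma> < \<alpha>)"

text \<open>Transfinite iteration: F^0 = T (top), F^(beta+1) = F(F^beta),
  F^alpha = Inf of F^beta for beta < alpha at limits.\<close>
definition iter :: "('i \<Rightarrow> 'a set) \<Rightarrow> (('i \<Rightarrow> 'a set) \<Rightarrow> ('i \<Rightarrow> 'a set)) \<Rightarrow> 'o::wellorder \<Rightarrow> ('i \<Rightarrow> 'a set)" where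
  "iter T F = wfrec {(x, y). x < y}
     (\<lambda>rec \<alpha>. if \<exists>\<beta>. imm_pred \<beta> \<alpha> then F (rec (THE \<beta>. imm_pred \<beta> \<alpha>))
              else rInf T (rec ` {\<beta>. \<beta> < \<alpha>}))"

definition stable :: "('i \<Rightarrow> 'a set) \<Rightarrow> (('i \<Rightarrow> 'a set) \<Rightarrow> ('i \<Rightarrow> 'a set)) \<Rightarrow> 'o::wellorder \<Rightarrow> bool" where
  "stable T F \<alpha> \<longleftrightarrow> F (iter T F \<alpha>) = iter T F \<alpha>"

definition has_outcome :: "('i \<Rightarrow> 'a set) \<Rightarrow> (('i \<Rightarrow> 'a set) \<Rightarrow> ('i \<Rightarrow> 'a set)) \<Rightarrow> 'o::wellorder itself \<Rightarrow> bool" where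
  "has_outcome T F _ \<longleftrightarrow> (\<exists>\<alpha>::'o. stable T F \<alpha>)"

definition outcome :: "('i \<Rightarrow> 'a set) \<Rightarrow> (('i \<Rightarrow> 'a set) \<Rightarrow> ('i \<Rightarrow> 'a set)) \<Rightarrow> 'o::wellorder itself \<Rightarrow> ('i \<Rightarrow> 'a set)" where
  "outcome T F _ = iter T F (LEAST \<alpha>::'o. stable T F \<alpha>)"

definition relaxation :: "('i \<Rightarrow> 'a set) \<Rightarrow> (('i \<Rightarrow> 'a set) \<Rightarrow> ('i \<Rightarrow> 'a set)) \<Rightarrow> (('i \<Rightarrow> 'a set) \<Rightarrow> ('i \<Rightarrow> 'a set)) \<Rightarrow> 'o::wellorder itself \<Rightarrow> bool" where
  "relaxation T F R _ \<longleftrightarrow> operator_on T R \<and>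
     (\<forall>\<alpha>::'o.
        F (iter T R \<alpha>) \<le> R (iter T R \<alpha>) \<and>
        (F (iter T R \<alpha>) \<le> iter T R \<alpha> \<longrightarrow> R (iter T R \<alpha>) \<le> iter T R \<alpha>) \<and>
        (R (iter T R \<alpha>) = iter T R \<alpha> \<longrightarrow> F (iter T R \<alpha>) = iter T R \<alpha>))"

definition order_independent :: "('i \<Rightarrow> 'a set) \<Rightarrow> (('i \<Rightarrow> 'a set) \<Rightarrow> ('i \<Rightarrow> 'a set)) \<Rightarrow> 'o::wellorder itself \<Rightarrow> bool" where
  "order_independent T F ot \<longleftrightarrow>
     (\<forall>X Y. X \<in> {outcome T R ot | R. relaxation T F R ot \<and> has_outcome T R ot} \<longrightarrow>
            Y \<in> {outcome T R ot | R. relaxation T F R ot \<and> has_outcome T R ot} \<longrightarrow> X = Y)"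

end

theory Submission
  imports Defs
begin

lemma imm_pred_unique: "imm_pred b a \<Longrightarrow> imm_pred c a \<Longrightarrow> b = c"
  unfolding imm_pred_def by (metis linorder_neqE)

lemma iter_unfold:
  fixes \<alpha> :: "'o::wellorder"
  shows "iter T F \<alpha> = (if \<exists>\<beta>. imm_pred \<beta> \<alpha> then F (iter T F (THE \<beta>. imm_pred \<beta> \<alpha>))
              else rInf T (iter T F ` {\<beta>. \<beta> < \<alpha>}))"
proof -
  have w: "wf {(x, y). x < (y::'o)}" by (rule wf)
  have "iter T F \<alpha> = (\<lambda>rec \<alpha>. if \<exists>\<beta>. imm_pred \<beta> \<alpha> then F (rec (THE \<beta>. imm_pred \<beta> \<alpha>))
              else rInf T (rec ` {\<beta>. \<beta> < \<alpha>})) (cut (iter T F) {(x, y). x < y} \<alpha>) \<alpha>"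
    unfolding iter_def by (rule wfrec[OF w])
  also have "\<dots> = (if \<exists>\<beta>. imm_pred \<beta> \<alpha> then F (iter T F (THE \<beta>. imm_pred \<beta> \<alpha>))
              else rInf T (iter T F ` {\<beta>. \<beta> < \<alpha>}))"
  proof (cases "\<exists>\<beta>. imm_pred \<beta> \<alpha>")
    case True
    then obtain b where b: "imm_pred b \<alpha>" by blast
    hence "(THE \<beta>. imm_pred \<beta> \<alpha>) = b" using imm_pred_unique by blast
    thus ?thesis using True b by (simp add: cut_apply imm_pred_def)
  next
    case False
    have "cut (iter T F) {(x, y). x < y} \<alpha> ` {\<beta>. \<beta> < \<alpha>} = iter T F ` {\<beta>. \<beta> < \<alpha>}"
      by (auto simp: cut_apply)
    thus ?thesis using False by simp
  qed
  finally show ?thesis .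
qed

lemma iter_succ: "imm_pred b a \<Longrightarrow> iter T F a = F (iter T F b)"
proof -
  assume b: "imm_pred b a"
  hence "(THE \<beta>. imm_pred \<beta> a) = b" using imm_pred_unique by blast
  thus ?thesis using b by (subst iter_unfold) auto
qed

lemma iter_lim: "\<not> (\<exists>b. imm_pred b a) \<Longrightarrow> iter T F a = rInf T (iter T F ` {\<beta>. \<beta> < a})"
  by (subst iter_unfold) auto

lemma succ_exists:
  fixes a b :: "'o::wellorder"
  assumes "a < b"
  shows "\<exists>s. imm_pred a s \<and> s \<le> b"
proof -
  define s where "s = (LEAST g. a < g)"
  have as: "a < s" unfolding s_def by (rule LeastI[of _ b]) (rule assms)
  have sb: "s \<le> b" unfolding s_def by (rule Least_le) (rule assms)
  have "imm_pred a s" unfolding imm_pred_def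
    using as by (metis s_def not_less_Least)
  thus ?thesis using sb by blast
qed

lemma imm_pred_le: "imm_pred b a \<Longrightarrow> x \<le> a \<Longrightarrow> x = a \<or> x \<le> b"
  unfolding imm_pred_def by (metis not_le order.not_eq_order_implies_strict)

lemma GSbar_contr: "GSbar T p S \<le> S"
  by (auto simp: GSbar_def le_fun_def)

lemma GSbar_restr: "restriction T (GSbar T p S)"
  by (auto simp: GSbar_def GS_def restriction_def)

lemma GSbar_mono:
  assumes "G \<le> S" shows "GSbar T p G \<le> GSbar T p S"
proof -
  have "\<And>i s' s. sdom p S i s' s \<Longrightarrow> sdom p G i s' s"
    using assms unfolding sdom_def le_fun_def by blast
  thus ?thesis using assms unfolding GSbar_def GS_def le_fun_def by blast
qed

lemma iter_restr:
  assumes "operator_on T F"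
  shows "restriction T (iter T F (a::'o::wellorder))"
proof (induction a rule: less_induct)
  case (less a)
  show ?case
  proof (cases "\<exists>b. imm_pred b a")
    case True
    then obtain b where b: "imm_pred b a" by blast
    hence "b < a" by (simp add: imm_pred_def)
    thus ?thesis using iter_succ[OF b, of T F] less assms by (simp add: operator_on_def)
  next
    case False
    thus ?thesis by (simp add: iter_lim restriction_def rInf_def)
  qed
qed

lemma op_GSbar: "operator_on T (GSbar T p)"
  using GSbar_restr by (simp add: operator_on_def GSbar_restr)

lemma iter_antitone:
  "\<forall>a\<le>b. iter T (GSbar T p) (b::'o::wellorder) \<le> iter T (GSbar T p) a"
proof (induction b rule: less_induct)
  case (less b)
  show ?case
  proof (cases "\<exists>c. imm_pred c b")
    case True
    then obtain c where c: "imm_pred c b" by blast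
    hence cb: "c < b" by (simp add: imm_pred_def)
    have e: "iter T (GSbar T p) b \<le> iter T (GSbar T p) c"
      using iter_succ[OF c] GSbar_contr by metis
    show ?thesis
    proof (intro allI impI)
      fix a assume "a \<le> b"
      hence "a = b \<or> a \<le> c" using imm_pred_le[OF c] by blast
      thus "iter T (GSbar T p) b \<le> iter T (GSbar T p) a"
        using e less[OF cb] by (meson order.trans order_refl)
    qed
  next
    case False
    show ?thesis
    proof (intro allI impI)
      fix a assume "a \<le> b"
      then consider "a = b" | "a < b" by fastforce
      thus "iter T (GSbar T p) b \<le> iter T (GSbar T p) a"
      proof cases
        case 2
        thus ?thesis using iter_lim[OF False, of T "GSbar T p"]
          by (auto simp: rInf_def le_fun_def)
      qed simp
    qed
  qed
qed

lemma fix_below_iter: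
  assumes "restriction T G" "GSbar T p G = G"
  shows "G \<le> iter T (GSbar T p) (a::'o::wellorder)"
proof (induction a rule: less_induct)
  case (less a)
  show ?case
  proof (cases "\<exists>b. imm_pred b a")
    case True
    then obtain b where b: "imm_pred b a" by blast
    hence "b < a" by (simp add: imm_pred_def)
    hence "G \<le> iter T (GSbar T p) b" using less by blast
    hence "GSbar T p G \<le> GSbar T p (iter T (GSbar T p) b)" by (rule GSbar_mono)
    thus ?thesis using iter_succ[OF b, of T "GSbar T p"] assms(2) by simp
  next
    case False
    thus ?thesis using less assms(1)
      by (auto simp: iter_lim rInf_def restriction_def le_fun_def)
  qed
qed

lemma relax_below:
  assumes "relaxation T (GSbar T p) R TYPE('o::wellorder)"
  shows "iter T (GSbar T p) (a::'o) \<le> iter T R a"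
proof (induction a rule: less_induct)
  case (less a)
  show ?case
  proof (cases "\<exists>b. imm_pred b a")
    case True
    then obtain b where b: "imm_pred b a" by blast
    hence "b < a" by (simp add: imm_pred_def)
    hence "iter T (GSbar T p) b \<le> iter T R b" using less by blast
    hence "GSbar T p (iter T (GSbar T p) b) \<le> GSbar T p (iter T R b)" by (rule GSbar_mono)
    also have "\<dots> \<le> R (iter T R b)" using assms by (simp add: relaxation_def)
    finally show ?thesis using iter_succ[OF b, of T] by simp
  next
    case False
    have "\<And>y. y < a \<Longrightarrow> iter T (GSbar T p) y \<le> iter T R y" using less by blast
    thus ?thesis using False
      by (simp add: iter_lim rInf_def le_fun_def) blast
  qed
qed

lemma has_out:
  fixes T :: "'i \<Rightarrow> 'a set"
  assumes long_enough: "\<not> (\<exists>f :: 'o::wellorder \<Rightarrow> ('i \<Rightarrow> 'a set). inj f)"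
  shows "\<exists>a::'o. stable T (GSbar T p) a"
proof (rule ccontr)
  assume ns: "\<not> (\<exists>a::'o. stable T (GSbar T p) a)"
  have "inj (iter T (GSbar T p) :: 'o \<Rightarrow> _)"
  proof (rule injI)
    fix x y :: 'o assume eq: "iter T (GSbar T p) x = iter T (GSbar T p) y"
    show "x = y"
    proof (rule ccontr)
      assume "x \<noteq> y"
      then obtain a b :: 'o where ab: "a < b" "iter T (GSbar T p) a = iter T (GSbar T p) b"
      proof (cases "x < y")
        case True show ?thesis by (rule that[OF True eq])
      next
        case False hence "y < x" using \<open>x \<noteq> y\<close> by simp
        show ?thesis by (rule that[OF \<open>y < x\<close> eq[symmetric]])
      qed
      obtain s :: 'o where s: "imm_pred a s" "s \<le> b" using succ_exists[OF ab(1)] by blast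
      have "a \<le> s" using s(1) unfolding imm_pred_def by (simp add: less_imp_le)
      have "iter T (GSbar T p) b \<le> iter T (GSbar T p) s"
        using iter_antitone[where b=b and T=T and p=p] s(2) by simp
      moreover have "iter T (GSbar T p) s \<le> iter T (GSbar T p) a"
        using iter_antitone[where b=s and T=T and p=p] \<open>a \<le> s\<close> by simp
      ultimately have "iter T (GSbar T p) s = iter T (GSbar T p) a" using ab(2) by simp
      hence "stable T (GSbar T p) a" using iter_succ[OF s(1), of T "GSbar T p"] by (simp add: stable_def)
      thus False using ns by blast
    qed
  qed
  thus False using long_enough by blast
qed

theorem mainTheorem8:
  fixes T :: "'i::finite \<Rightarrow> 'a set"
    and p :: "'i \<Rightarrow> ('i \<Rightarrow> 'a) \<Rightarrow> real"
  assumes nonempty: "\<And>i. T i \<noteq> {}"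
    and long_enough: "\<not> (\<exists>f :: 'o::wellorder \<Rightarrow> ('i \<Rightarrow> 'a set). inj f)"
  shows "(has_outcome T (GSbar T p) TYPE('o)
         \<and> restriction T (outcome T (GSbar T p) TYPE('o))
         \<and> GSbar T p (outcome T (GSbar T p) TYPE('o)) = outcome T (GSbar T p) TYPE('o)
         \<and> (\<forall>G. restriction T G \<and> GSbar T p G = G \<longrightarrow> G \<le> outcome T (GSbar T p) TYPE('o)))
         \<and> order_independent T (GSbar T p) TYPE('o)
         \<and> (\<forall>R. relaxation T (GSbar T p) R TYPE('o) \<longrightarrow>
           (\<forall>\<alpha>::'o. iter T (GSbar T p) \<alpha> \<le> iter T R \<alpha>))"
proof -
  define Out where "Out = outcome T (GSbar T p) TYPE('o)"
  have ho: "has_outcome T (GSbar T p) TYPE('o)"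
    using has_out[OF long_enough] by (simp add: has_outcome_def)
  have rOut: "restriction T Out"
    unfolding Out_def outcome_def by (rule iter_restr[OF op_GSbar])
  have fOut: "GSbar T p Out = Out"
    unfolding Out_def outcome_def using has_out[OF long_enough, of T p]
    by (metis LeastI stable_def)
  have lOut: "\<forall>G. restriction T G \<and> GSbar T p G = G \<longrightarrow> G \<le> Out"
    unfolding Out_def outcome_def using fix_below_iter by blast
  have rel: "\<forall>R. relaxation T (GSbar T p) R TYPE('o) \<longrightarrow>
           (\<forall>\<alpha>::'o. iter T (GSbar T p) \<alpha> \<le> iter T R \<alpha>)"
    using relax_below by blast
  have eqOut: "X = Out" if Xin: "X \<in> {outcome T R TYPE('o) | R. relaxation T (GSbar T p) R TYPE('o)
       \<and> has_outcome T R TYPE('o)}" for X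
  proof -
    obtain R where R: "X = outcome T R TYPE('o)" "relaxation T (GSbar T p) R TYPE('o)"
      "has_outcome T R TYPE('o)" using Xin by blast
    define a where "a = (LEAST a::'o. stable T R a)"
    have Xa: "X = iter T R a" using R(1) by (simp add: outcome_def a_def)
    have "stable T R a" unfolding a_def using R(3) by (metis LeastI has_outcome_def)
    hence "R X = X" using Xa by (simp add: stable_def)
    hence fX: "GSbar T p X = X" using R(2) Xa by (simp add: relaxation_def)
    have rX: "restriction T X" using Xa iter_restr[of T R a] R(2) by (simp add: relaxation_def)
    have "X \<le> Out" using lOut fX rX by simp
    moreover have "Out \<le> iter T (GSbar T p) a" by (rule fix_below_iter[OF rOut fOut])
    hence "Out \<le> X" using relax_below[OF R(2), of a] Xa by simp
    ultimately show ?thesis by simp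
  qed
  have oi: "order_independent T (GSbar T p) TYPE('o)"
    unfolding order_independent_def proof (intro allI impI)
    fix X Y assume "X \<in> {outcome T R TYPE('o) | R. relaxation T (GSbar T p) R TYPE('o) \<and> has_outcome T R TYPE('o)}"
      "Y \<in> {outcome T R TYPE('o) | R. relaxation T (GSbar T p) R TYPE('o) \<and> has_outcome T R TYPE('o)}"
    thus "X = Y" using eqOut[of X] eqOut[of Y] by simp
  qed
  show ?thesis using ho rOut fOut lOut rel oi unfolding Out_def by blast
qed

end
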